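(* Let $K$ be a finite simplicial complex with a hereditary ordering $\succ$. If $\sigma\in M(K)$, then $\mu(\lambda(\sigma))=\sigma$ and $\lambda(\sigma)\notin M(K)$.
   Context: A finite simplicial complex $K$ is a family of subsets of a finite vertex set containing $\emptyset$ and closed under subsets; $\dim\sigma=|\sigma|-1$; a facet is a face of codimension one. Given a strict total ordering $\succ$ of $K$, for non-empty $\sigma$ let $\mu(\sigma)$ be the $\succ$-largest facet of $\sigma$. $\succ$ is hereditary if $\sigma\succ\tau$ whenever $\dim\sigma>\dim\tau$, and $\sigma\succ\tau$ whenever $\mu(\sigma)\succ\mu(\tau)$. $M(K)$ is the set of simplices $\sigma\in K$ such that $\sigma=\mu(\eta)$ for some $\eta\in K$. For a simplex $\sigma\in K$ of dimension $k$ that is not maximal with respect to inclusion, $\lambda(\sigma)$ denotes the $\succ$-smallest $(k+1)$-dimensional simplex of $K$ containing $\sigma$ (elements of $M(K)$ are not maximal, so $\lambda$ is defined on them). *)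

theory Defs
  imports Main
begin

text \<open>A finite simplicial complex: a family of subsets of a finite vertex set,
containing the empty set and closed under subsets.  dim s = card s - 1.\<close>
definition simplicial_complex :: "'v set set \<Rightarrow> bool" where
  "simplicial_complex K \<longleftrightarrow> finite (\<Union>K) \<and> {} \<in> K \<and> (\<forall>s\<in>K. \<forall>t. t \<subseteq> s \<longrightarrow> t \<in> K)"

text \<open>gt s t means s \<succ> t; a strict total ordering of K.\<close>
definition strict_total_order_on :: "'v set set \<Rightarrow> ('v set \<Rightarrow> 'v set \<Rightarrow> bool) \<Rightarrow> bool" where
  "strict_total_order_on K gt \<longleftrightarrow>
     (\<forall>s\<in>K. \<not> gt s s) \<and>
     (\<forall>s\<in>K. \<forall>t\<in>K. \<forall>u\<in>K. gt s t \<longrightarrow> gt t u \<longrightarrow> gt s u) \<and>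
     (\<forall>s\<in>K. \<forall>t\<in>K. s \<noteq> t \<longrightarrow> gt s t \<or> gt t s)"

definition facet :: "'v set \<Rightarrow> 'v set \<Rightarrow> bool" where
  "facet t s \<longleftrightarrow> t \<subseteq> s \<and> card t + 1 = card s"

definition mu :: "('v set \<Rightarrow> 'v set \<Rightarrow> bool) \<Rightarrow> 'v set \<Rightarrow> 'v set" where
  "mu gt s = (THE t. facet t s \<and> (\<forall>t'. facet t' s \<and> t' \<noteq> t \<longrightarrow> gt t t'))"

definition hereditary :: "'v set set \<Rightarrow> ('v set \<Rightarrow> 'v set \<Rightarrow> bool) \<Rightarrow> bool" where
  "hereditary K gt \<longleftrightarrow> strict_total_order_on K gt \<and>
     (\<forall>s\<in>K. \<forall>t\<in>K. card s > card t \<longrightarrow> gt s t) \<and>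
     (\<forall>s\<in>K. \<forall>t\<in>K. s \<noteq> {} \<longrightarrow> t \<noteq> {} \<longrightarrow> gt (mu gt s) (mu gt t) \<longrightarrow> gt s t)"

definition MK :: "'v set set \<Rightarrow> ('v set \<Rightarrow> 'v set \<Rightarrow> bool) \<Rightarrow> 'v set set" where
  "MK K gt = {s. \<exists>eta\<in>K. eta \<noteq> {} \<and> s = mu gt eta}"

definition lam :: "'v set set \<Rightarrow> ('v set \<Rightarrow> 'v set \<Rightarrow> bool) \<Rightarrow> 'v set \<Rightarrow> 'v set" where
  "lam K gt s = (THE e. e \<in> K \<and> s \<subseteq> e \<and> card e = card s + 1 \<and>
      (\<forall>e'. e' \<in> K \<and> s \<subseteq> e' \<and> card e' = card s + 1 \<and> e' \<noteq> e \<longrightarrow> gt e' e))"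

end

theory Submission
  imports Defs
begin

lemma sto_flip: "strict_total_order_on K gt \<Longrightarrow> strict_total_order_on K (\<lambda>a b. gt b a)"
  unfolding strict_total_order_on_def by blast

lemma max_ex:
  assumes "strict_total_order_on K gt" "finite F" "F \<noteq> {}" "F \<subseteq> K"
  shows "\<exists>m\<in>F. \<forall>x\<in>F. x \<noteq> m \<longrightarrow> gt m x"
  using assms(2,3,4)
proof (induction F rule: finite_ne_induct)
  case (singleton x) then show ?case by auto
next
  case (insert x F)
  then obtain m where m: "m\<in>F" "\<forall>y\<in>F. y\<noteq>m \<longrightarrow> gt m y" by auto
  show ?case
  proof (cases "gt x m")
    case True
    have "\<forall>y\<in>insert x F. y \<noteq> x \<longrightarrow> gt x y"
    proof (intro ballI impI)
      fix y assume y: "y \<in> insert x F" "y \<noteq> x"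
      show "gt x y"
      proof (cases "y = m")
        case True then show ?thesis using \<open>gt x m\<close> by simp
      next
        case False
        then have "gt m y" using m y by auto
        moreover have "x \<in> K" "m \<in> K" "y \<in> K" using insert.prems m y by auto
        ultimately show ?thesis using \<open>gt x m\<close> assms(1) unfolding strict_total_order_on_def by blast
      qed
    qed
    then show ?thesis by blast
  next
    case False
    have "x \<noteq> m" using insert m by auto
    moreover have "x \<in> K" "m \<in> K" using insert.prems m by auto
    ultimately have "gt m x" using False assms(1) unfolding strict_total_order_on_def by blast
    then show ?thesis using m by auto
  qed
qed

lemma the_unique:
  assumes "strict_total_order_on K gt" "Q m" "\<forall>x. Q x \<and> x \<noteq> m \<longrightarrow> gt m x" "{x. Q x} \<subseteq> K"
  shows "(THE t. Q t \<and> (\<forall>t'. Q t' \<and> t' \<noteq> t \<longrightarrow> gt t t')) = m"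
proof (rule the_equality)
  show "Q m \<and> (\<forall>t'. Q t' \<and> t' \<noteq> m \<longrightarrow> gt m t')" using assms by blast
next
  fix t assume t: "Q t \<and> (\<forall>t'. Q t' \<and> t' \<noteq> t \<longrightarrow> gt t t')"
  show "t = m"
  proof (rule ccontr)
    assume "t \<noteq> m"
    then have "gt m t" "gt t m" using t assms by auto
    moreover have "t \<in> K" "m \<in> K" using t assms by auto
    ultimately show False using assms(1) unfolding strict_total_order_on_def by blast
  qed
qed

lemma mu_props:
  assumes sc: "simplicial_complex K" and sto: "strict_total_order_on K gt"
    and eta: "eta \<in> K" "eta \<noteq> {}"
  shows "facet (mu gt eta) eta \<and> (\<forall>t'. facet t' eta \<and> t' \<noteq> mu gt eta \<longrightarrow> gt (mu gt eta) t')"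
proof -
  have fin: "finite eta" using sc eta unfolding simplicial_complex_def
    by (meson Union_upper finite_subset)
  let ?F = "{t. facet t eta}"
  have FK: "?F \<subseteq> K" using sc eta unfolding simplicial_complex_def facet_def by blast
  have "?F \<subseteq> Pow eta" by (auto simp: facet_def)
  then have Ffin: "finite ?F" using fin by (meson finite_Pow_iff finite_subset)
  obtain x where "x \<in> eta" using eta by auto
  then have "facet (eta - {x}) eta" using fin unfolding facet_def
    by (simp add: card_Diff_singleton) (metis Suc_pred card_gt_0_iff empty_iff)
  then have "?F \<noteq> {}" by blast
  then obtain m where m: "m \<in> ?F" "\<forall>x\<in>?F. x \<noteq> m \<longrightarrow> gt m x"
    using max_ex[OF sto Ffin _ FK] by blast
  have "mu gt eta = m" unfolding mu_def
    by (rule the_unique[OF sto]) (use m FK in auto)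
  then show ?thesis using m by auto
qed

lemma lam_props:
  assumes sc: "simplicial_complex K" and sto: "strict_total_order_on K gt"
    and eta: "eta \<in> K" "s \<subseteq> eta" "card eta = card s + 1"
  shows "lam K gt s \<in> K \<and> s \<subseteq> lam K gt s \<and> card (lam K gt s) = card s + 1 \<and>
     (\<forall>e'. e' \<in> K \<and> s \<subseteq> e' \<and> card e' = card s + 1 \<and> e' \<noteq> lam K gt s \<longrightarrow> gt e' (lam K gt s))"
proof -
  let ?F = "{e. e \<in> K \<and> s \<subseteq> e \<and> card e = card s + 1}"
  have FK: "?F \<subseteq> K" by blast
  have "finite K" using sc unfolding simplicial_complex_def
    by (meson Sup_upper finite_UnionD)
  then have Ffin: "finite ?F" by (rule finite_subset[rotated]) auto
  have "?F \<noteq> {}" using eta by blast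
  then obtain m where m: "m \<in> ?F" "\<forall>x\<in>?F. x \<noteq> m \<longrightarrow> gt x m"
    using max_ex[OF sto_flip[OF sto] Ffin _ FK] by blast
  have "lam K gt s = m" unfolding lam_def
  proof (rule the_equality)
    show "m \<in> K \<and> s \<subseteq> m \<and> card m = card s + 1 \<and>
      (\<forall>e'. e' \<in> K \<and> s \<subseteq> e' \<and> card e' = card s + 1 \<and> e' \<noteq> m \<longrightarrow> gt e' m)" using m by auto
  next
    fix t assume t: "t \<in> K \<and> s \<subseteq> t \<and> card t = card s + 1 \<and>
      (\<forall>e'. e' \<in> K \<and> s \<subseteq> e' \<and> card e' = card s + 1 \<and> e' \<noteq> t \<longrightarrow> gt e' t)"
    show "t = m"
    proof (rule ccontr)
      assume "t \<noteq> m"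
      then have "gt m t" "gt t m" using t m by auto
      moreover have "t \<in> K" "m \<in> K" using t m by auto
      ultimately show False using sto unfolding strict_total_order_on_def by blast
    qed
  qed
  then show ?thesis using m by auto
qed

theorem lemma5:
  fixes K :: "'v set set" and gt :: "'v set \<Rightarrow> 'v set \<Rightarrow> bool"
  assumes "simplicial_complex K"
    and "hereditary K gt"
    and "s \<in> MK K gt"
  shows "mu gt (lam K gt s) = s \<and> lam K gt s \<notin> MK K gt"
proof -
  note sc = assms(1)
  have sto: "strict_total_order_on K gt" and her: "\<forall>s\<in>K. \<forall>t\<in>K. s \<noteq> {} \<longrightarrow> t \<noteq> {} \<longrightarrow> gt (mu gt s) (mu gt t) \<longrightarrow> gt s t"
    using assms(2) unfolding hereditary_def by auto
  have asym: "\<And>a b. a \<in> K \<Longrightarrow> b \<in> K \<Longrightarrow> gt a b \<Longrightarrow> gt b a \<Longrightarrow> False"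
    using sto unfolding strict_total_order_on_def by blast
  have finK: "\<And>x. x \<in> K \<Longrightarrow> finite x" using sc unfolding simplicial_complex_def
    by (meson Union_upper finite_subset)
  have subK: "\<And>x y. x \<in> K \<Longrightarrow> y \<subseteq> x \<Longrightarrow> y \<in> K" using sc unfolding simplicial_complex_def by blast
  obtain eta where eta: "eta \<in> K" "eta \<noteq> {}" "s = mu gt eta" using assms(3) unfolding MK_def by auto
  have fe: "facet s eta" using mu_props[OF sc sto eta(1,2)] eta(3) by simp
  have sK: "s \<in> K" using fe eta subK unfolding facet_def by blast
  define L where "L = lam K gt s"
  have L: "L \<in> K" "s \<subseteq> L" "card L = card s + 1"
    "\<forall>e'. e' \<in> K \<and> s \<subseteq> e' \<and> card e' = card s + 1 \<and> e' \<noteq> L \<longrightarrow> gt e' L"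
    using lam_props[OF sc sto eta(1)] fe unfolding facet_def L_def by auto
  have Lne: "L \<noteq> {}" using L(3) by auto
  have muL: "facet (mu gt L) L \<and> (\<forall>t'. facet t' L \<and> t' \<noteq> mu gt L \<longrightarrow> gt (mu gt L) t')"
    using mu_props[OF sc sto L(1) Lne] .
  have fsL: "facet s L" using L unfolding facet_def by simp
  have part1: "mu gt L = s"
  proof (rule ccontr)
    assume ne: "mu gt L \<noteq> s"
    then have "gt (mu gt L) s" using muL fsL by blast
    then have g: "gt L eta" using her L(1) eta Lne by metis
    show False
    proof (cases "eta = L")
      case True then show False using ne eta by simp
    next
      case False
      then have "gt eta L" using L(4) eta(1) fe unfolding facet_def by auto
      then show False using asym g L(1) eta(1) by blast
    qed
  qed
  have part2: "L \<notin> MK K gt"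
  proof
    assume "L \<in> MK K gt"
    then obtain xi where xi: "xi \<in> K" "xi \<noteq> {}" "L = mu gt xi" unfolding MK_def by auto
    have mx: "facet L xi \<and> (\<forall>t'. facet t' xi \<and> t' \<noteq> L \<longrightarrow> gt L t')"
      using mu_props[OF sc sto xi(1,2)] xi(3) by simp
    have fxi: "finite xi" using finK xi(1) .
    have "L \<subseteq> xi" "card xi = card L + 1" using mx unfolding facet_def by auto
    then have "xi - L \<noteq> {}" by auto
    then obtain b where b: "b \<in> xi" "b \<notin> L" by auto
    define e where "e = insert b s"
    have bs: "b \<notin> s" using b L(2) by auto
    have fs: "finite s" using finK sK .
    have ce: "card e = card s + 1" using bs fs unfolding e_def by simp
    have exi: "e \<subseteq> xi" using b L(2) \<open>L \<subseteq> xi\<close> unfolding e_def by auto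
    have eK: "e \<in> K" using subK xi(1) exi .
    have eL: "e \<noteq> L" using b unfolding e_def by auto
    have "facet e xi" unfolding facet_def using exi ce L(3) \<open>card xi = card L + 1\<close> by simp
    then have "gt L e" using mx eL by blast
    moreover have "gt e L" using L(4) eK ce eL unfolding e_def by auto
    ultimately show False using asym L(1) eK by blast
  qed
  show ?thesis using part1 part2 unfolding L_def by simp
qed

end
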